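(* Let $n\geqslant 2$ and let $\alpha$ be a partial cofinite isometry of $\mathbb{N}^n$ such that for every $i\in\{1,\ldots,n\}$ there is some $\mathbf{m}_i\in\operatorname{dom}\alpha\setminus\{\mathbf{1}\}$ (with $m\in\mathbb{N}$) satisfying $(\mathbf{m}_i)\alpha\in\vec{\mathbf{1}}_i$. Then $(\mathbf{x}_i)\alpha=\mathbf{x}_i$ for every $i\in\{1,\ldots,n\}$ and every $\mathbf{x}_i\in\operatorname{dom}\alpha\cap\vec{\mathbf{1}}_i$.
   Context: $\mathbb{N}=\{1,2,3,\ldots\}$ and $\mathbb{N}^n$ carries the Euclidean metric $d$. A partial isometry of $\mathbb{N}^n$ is an injective partial map $\alpha\colon\mathbb{N}^n\rightharpoonup\mathbb{N}^n$ with $d((\mathbf{x})\alpha,(\mathbf{y})\alpha)=d(\mathbf{x},\mathbf{y})$ for all $\mathbf{x},\mathbf{y}\in\operatorname{dom}\alpha$; it is cofinite if $\mathbb{N}^n\setminus\operatorname{dom}\alpha$ and $\mathbb{N}^n\setminus\operatorname{ran}\alpha$ are finite. Maps are written on the right. $\mathbf{1}=(1,\ldots,1)$; for $k\in\mathbb{N}$ and $j\in\{1,\ldots,n\}$, $\mathbf{k}_j$ is the point whose $j$-th coordinate is $k$ and all other coordinates equal $1$; $\vec{\mathbf{1}}_j=\{\mathbf{k}_j\colon k\in\mathbb{N}\}$. *)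

theory Defs
  imports "HOL-Analysis.Analysis"
begin

text \<open>Points of N^n (N = {1,2,...}) are vectors nat^'n with all coordinates >= 1;
  the dimension n is CARD('n).\<close>

definition NN :: "(nat ^ 'n) set" where
  "NN = {x. \<forall>j. 1 \<le> x $ j}"

definition dN :: "nat ^ 'n \<Rightarrow> nat ^ 'n \<Rightarrow> real" where
  "dN x y = sqrt (\<Sum>j\<in>UNIV. (real (x $ j) - real (y $ j))^2)"

text \<open>A partial map is a map into option; maps are written on the right in the paper,
  here (x)alpha is alpha x.\<close>

definition partial_isometry :: "(nat ^ 'n \<Rightarrow> (nat ^ 'n) option) \<Rightarrow> bool" where
  "partial_isometry \<alpha> \<longleftrightarrow>
     dom \<alpha> \<subseteq> NN \<and> ran \<alpha> \<subseteq> NN \<and> inj_on \<alpha> (dom \<alpha>) \<and>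
     (\<forall>x\<in>dom \<alpha>. \<forall>y\<in>dom \<alpha>. dN (the (\<alpha> x)) (the (\<alpha> y)) = dN x y)"

definition cofinite_pmap :: "(nat ^ 'n \<Rightarrow> (nat ^ 'n) option) \<Rightarrow> bool" where
  "cofinite_pmap \<alpha> \<longleftrightarrow> finite (NN - dom \<alpha>) \<and> finite (NN - ran \<alpha>)"

definition ones :: "nat ^ 'n" where
  "ones = (\<chi> j. 1)"

definition axis_pt :: "'n \<Rightarrow> nat \<Rightarrow> nat ^ 'n" where
  "axis_pt i k = (\<chi> j. if j = i then k else 1)"

definition ray :: "'n \<Rightarrow> (nat ^ 'n) set" where
  "ray i = {axis_pt i k | k. 1 \<le> k}"

end

theory Submission
  imports Defs
begin

definition sqd :: "nat^'n \<Rightarrow> nat^'n \<Rightarrow> real" where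
  "sqd x y = (\<Sum>j\<in>UNIV. (real (x $ j) - real (y $ j))^2)"

lemma dN_sq: "(dN x y)^2 = sqd x y"
  unfolding dN_def sqd_def by (simp add: sum_nonneg)

lemma axis_in_NN: "1 \<le> t \<Longrightarrow> axis_pt j t \<in> NN"
  unfolding NN_def axis_pt_def by auto

lemma axis_comp: "axis_pt i k $ j = (if j = i then k else 1)"
  unfolding axis_pt_def by simp

lemma axis_inj: "axis_pt j s = axis_pt j t \<Longrightarrow> s = t"
  by (metis axis_comp)

lemma eventually_axis:
  assumes "finite (NN - S)"
  shows "\<exists>N\<ge>1. \<forall>t\<ge>N. axis_pt j t \<in> S"
proof -
  let ?F = "{t. 1 \<le> t \<and> axis_pt j t \<notin> S}"
  have "axis_pt j ` ?F \<subseteq> NN - S" using axis_in_NN by auto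
  hence "finite (axis_pt j ` ?F)" using assms finite_subset by blast
  moreover have "inj_on (axis_pt j) ?F" by (rule inj_onI) (rule axis_inj)
  ultimately have "finite ?F" using finite_imageD by blast
  then obtain k where "?F \<subseteq> {..<k}" using finite_nat_bounded by blast
  hence "\<forall>t\<ge>max 1 k. axis_pt j t \<in> S" by fastforce
  thus ?thesis by (intro exI[of _ "max 1 k"]) auto
qed

lemma other_index:
  assumes "CARD('n::finite) \<ge> 2" shows "\<exists>l::'n. l \<noteq> j"
proof (rule ccontr)
  assume "\<not> ?thesis"
  hence "UNIV = {j}" by auto
  hence "CARD('n) = 1" by (metis card_1_singleton_iff One_nat_def)
  with assms show False by simp
qed

lemma sq_ge1: "(a::nat) \<noteq> b \<Longrightarrow> (real a - real b)^2 \<ge> 1"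
proof -
  assume "a \<noteq> b"
  hence "real a - real b \<ge> 1 \<or> real b - real a \<ge> 1" by linarith
  thus ?thesis
  proof
    assume h: "real a - real b \<ge> 1"
    have "1 * 1 \<le> (real a - real b) * (real a - real b)" by (rule mult_mono) (use h in auto)
    thus ?thesis by (simp add: power2_eq_square)
  next
    assume h: "real b - real a \<ge> 1"
    have "1 * 1 \<le> (real b - real a) * (real b - real a)" by (rule mult_mono) (use h in auto)
    thus ?thesis by (simp add: power2_eq_square algebra_simps)
  qed
qed

lemma sum_single:
  fixes h :: "'n::finite \<Rightarrow> real"
  assumes "\<forall>l. l \<noteq> k \<longrightarrow> h l = 0" shows "(\<Sum>l\<in>UNIV. h l) = h k"
proof -
  have "(\<Sum>l\<in>UNIV. h l) = (\<Sum>l\<in>{k}. h l)"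
    by (rule sum.mono_neutral_right) (use assms in auto)
  thus ?thesis by simp
qed

lemma sqd_diff:
  assumes "\<forall>l. l \<noteq> k \<longrightarrow> U$l = V$l"
  shows "sqd U W - sqd V W = (real (U$k) - real (W$k))^2 - (real (V$k) - real (W$k))^2"
proof -
  have "sqd U W - sqd V W = (\<Sum>l\<in>UNIV. (real (U$l) - real (W$l))^2 - (real (V$l) - real (W$l))^2)"
    unfolding sqd_def by (simp add: sum_subtractf)
  also have "\<dots> = (real (U$k) - real (W$k))^2 - (real (V$k) - real (W$k))^2"
    by (rule sum_single) (use assms in auto)
  finally show ?thesis .
qed

lemma unit_step:
  assumes "sqd Q P = 1"
  shows "\<exists>k. (\<forall>l. l \<noteq> k \<longrightarrow> Q$l = P$l) \<and> (real (Q$k) - real (P$k))^2 = 1"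
proof -
  define g where "g l = (real (Q$l) - real (P$l))^2" for l
  have g0: "g l \<ge> 0" for l by (simp add: g_def)
  have gs: "sum g UNIV = 1" using assms by (simp add: sqd_def g_def)
  have "\<exists>k. Q$k \<noteq> P$k"
  proof (rule ccontr)
    assume "\<not> ?thesis" hence "\<forall>l. g l = 0" by (simp add: g_def)
    hence "sum g UNIV = 0" by simp
    with gs show False by simp
  qed
  then obtain k where k: "Q$k \<noteq> P$k" by blast
  have gk: "g k \<ge> 1" using sq_ge1[OF k] by (simp add: g_def)
  have split: "sum g UNIV = g k + sum g (UNIV - {k})" by (simp add: sum.remove)
  have rest: "sum g (UNIV - {k}) \<ge> 0" by (simp add: sum_nonneg g0)
  have gk1: "g k = 1" and r0: "sum g (UNIV - {k}) = 0" using gs split gk rest by linarith+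
  hence "\<forall>l\<in>UNIV - {k}. g l = 0" using sum_nonneg_eq_0_iff[of "UNIV - {k}" g] g0 by auto
  hence "\<forall>l. l \<noteq> k \<longrightarrow> Q$l = P$l" by (auto simp: g_def)
  with gk1 show ?thesis unfolding g_def by blast
qed

lemma alg:
  fixes P d X M Y :: real
  assumes "(P + d - X)^2 - (P - X)^2 = (M + 1 - Y)^2 - (M - Y)^2" and "d^2 = 1"
  shows "d * (P - X) = M - Y"
proof -
  have dd: "d * d = 1" using assms(2) by (simp add: power2_eq_square)
  have h1: "(P + d - X)^2 - (P - X)^2 = 2 * (d * (P - X)) + d * d"
    by (simp add: power2_eq_square algebra_simps)
  have h2: "(M + 1 - Y)^2 - (M - Y)^2 = 2 * (M - Y) + 1"
    by (simp add: power2_eq_square algebra_simps)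
  have cal: "2 * (d * (P - X)) + d * d = 2 * (M - Y) + 1" using h1 h2 assms(1) by linarith
  have aux: "\<And>a b e::real. 2 * a + e = 2 * b + 1 \<Longrightarrow> e = 1 \<Longrightarrow> a = b" by linarith
  show ?thesis by (rule aux[OF cal dd])
qed

lemma coord:
  fixes \<alpha> :: "nat ^ 'n \<Rightarrow> (nat ^ 'n) option"
  assumes card: "CARD('n) \<ge> 2" and pi: "partial_isometry \<alpha>" and cf: "cofinite_pmap \<alpha>"
  shows "\<exists>k. \<forall>x\<in>dom \<alpha>. the (\<alpha> x) $ k = x $ j"
proof -
  define A where "A x = the (\<alpha> x)" for x
  have domNN: "dom \<alpha> \<subseteq> NN" and ranNN: "ran \<alpha> \<subseteq> NN"
    and iso: "\<forall>x\<in>dom \<alpha>. \<forall>y\<in>dom \<alpha>. dN (A x) (A y) = dN x y"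
    using pi unfolding partial_isometry_def A_def by auto
  have fd: "finite (NN - dom \<alpha>)" and fr: "finite (NN - ran \<alpha>)"
    using cf unfolding cofinite_pmap_def by auto
  have sq: "sqd (A x) (A y) = sqd x y" if "x \<in> dom \<alpha>" "y \<in> dom \<alpha>" for x y
    using iso that dN_sq by metis
  have Aran: "A x \<in> ran \<alpha>" if "x \<in> dom \<alpha>" for x
    using that unfolding A_def by (auto simp: ran_def dom_def)
  have ANN: "A x $ l \<ge> 1" if "x \<in> dom \<alpha>" for x l
    using Aran[OF that] ranNN unfolding NN_def by auto
  have xNN: "x $ l \<ge> 1" if "x \<in> dom \<alpha>" for x l
    using that domNN unfolding NN_def by auto
  obtain N where N1: "N \<ge> 1" and ND: "\<forall>t\<ge>N. axis_pt j t \<in> dom \<alpha>"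
    using eventually_axis[OF fd] by blast
  define p where "p = axis_pt j N"
  define q where "q = axis_pt j (N+1)"
  have pD: "p \<in> dom \<alpha>" and qD: "q \<in> dom \<alpha>" using ND by (auto simp: p_def q_def)
  have pq: "\<forall>l. l \<noteq> j \<longrightarrow> q$l = p$l" by (simp add: p_def q_def axis_comp)
  have qj: "q $ j = N+1" and pj: "p $ j = N" by (simp_all add: p_def q_def axis_comp)
  have "sqd q p = 1"
  proof -
    have "sqd q p - sqd p p = (real (q$j) - real (p$j))^2 - (real (p$j) - real (p$j))^2"
      by (rule sqd_diff[OF pq])
    moreover have "sqd p p = 0" by (simp add: sqd_def)
    ultimately show ?thesis by (simp add: qj pj)
  qed
  hence "sqd (A q) (A p) = 1" using sq pD qD by simp
  then obtain k where kk: "\<forall>l. l \<noteq> k \<longrightarrow> A q $ l = A p $ l"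
    and d1: "(real (A q $ k) - real (A p $ k))^2 = 1" using unit_step by blast
  define d where "d = real (A q $ k) - real (A p $ k)"
  have dsq: "d^2 = 1" using d1 by (simp add: d_def)
  have key: "d * (real (A p $ k) - real (A x $ k)) = real N - real (x $ j)" if xD: "x \<in> dom \<alpha>" for x
  proof -
    have e1: "sqd (A q) (A x) - sqd (A p) (A x) = sqd q x - sqd p x" using sq xD pD qD by simp
    have e2: "sqd (A q) (A x) - sqd (A p) (A x) = (real (A q $ k) - real (A x $ k))^2 - (real (A p $ k) - real (A x $ k))^2"
      by (rule sqd_diff[OF kk])
    have e3: "sqd q x - sqd p x = (real (q $ j) - real (x $ j))^2 - (real (p$j) - real (x$j))^2"
      by (rule sqd_diff[OF pq])
    have "real (A q $ k) = real (A p $ k) + d" by (simp add: d_def)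
    hence "(real (A p $ k) + d - real (A x $ k))^2 - (real (A p $ k) - real (A x $ k))^2
        = (real N + 1 - real (x $ j))^2 - (real N - real (x $ j))^2"
      using e1 e2 e3 qj pj by (simp add: add.commute)
    thus ?thesis using alg dsq by blast
  qed
  have "d = 1 \<or> d = -1" using dsq by (simp add: power2_eq_1_iff)
  moreover have "d \<noteq> -1"
  proof
    assume dm: "d = -1"
    define t where "t = A p $ k + N + 1"
    have xD: "axis_pt j t \<in> dom \<alpha>" using ND by (simp add: t_def)
    have "d * (real (A p $ k) - real (A (axis_pt j t) $ k)) = real N - real t"
      using key[OF xD] by (simp add: axis_comp)
    hence "real (A (axis_pt j t) $ k) = -1" using dm by (simp add: t_def)
    thus False using ANN[OF xD, of k] by simp
  qed
  ultimately have d1': "d = 1" by blast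
  define c where "c = real (A p $ k) - real N"
  have hX: "real (A x $ k) = c + real (x $ j)" if "x \<in> dom \<alpha>" for x
    using key[OF that] d1' by (simp add: c_def)
  have c_ge: "c \<ge> 0"
  proof -
    obtain l where l: "l \<noteq> j" using other_index[OF card] by blast
    obtain N' where "N' \<ge> 1" "\<forall>t\<ge>N'. axis_pt l t \<in> dom \<alpha>"
      using eventually_axis[OF fd] by blast
    hence xD: "axis_pt l N' \<in> dom \<alpha>" by simp
    have "real (A (axis_pt l N') $ k) = c + 1" using hX[OF xD] l by (simp add: axis_comp)
    thus ?thesis using ANN[OF xD, of k] by linarith
  qed
  have c_le: "c \<le> 0"
  proof -
    obtain l where l: "l \<noteq> k" using other_index[OF card] by blast
    obtain N' where "N' \<ge> 1" "\<forall>t\<ge>N'. axis_pt l t \<in> ran \<alpha>"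
      using eventually_axis[OF fr] by blast
    hence "axis_pt l N' \<in> ran \<alpha>" by simp
    then obtain x where ax: "\<alpha> x = Some (axis_pt l N')" unfolding ran_def by blast
    hence xD: "x \<in> dom \<alpha>" by auto
    have "A x = axis_pt l N'" using ax by (simp add: A_def)
    hence "A x $ k = 1" using l by (simp add: axis_comp)
    hence "1 = c + real (x $ j)" using hX[OF xD] by simp
    thus ?thesis using xNN[OF xD, of j] by linarith
  qed
  have "\<forall>x\<in>dom \<alpha>. A x $ k = x $ j"
  proof
    fix x assume "x \<in> dom \<alpha>"
    hence "real (A x $ k) = real (x $ j)" using hX c_ge c_le by simp
    thus "A x $ k = x $ j" by simp
  qed
  thus ?thesis unfolding A_def by blast
qed

theorem lemma2p8:
  fixes \<alpha> :: "nat ^ 'n \<Rightarrow> (nat ^ 'n) option"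
  assumes "CARD('n) \<ge> 2"
    and "partial_isometry \<alpha>"
    and "cofinite_pmap \<alpha>"
    and "\<forall>i. \<exists>m. 1 \<le> m \<and> axis_pt i m \<in> dom \<alpha> - {ones}
                  \<and> the (\<alpha> (axis_pt i m)) \<in> ray i"
  shows "\<forall>i. \<forall>x \<in> dom \<alpha> \<inter> ray i. \<alpha> x = Some x"
proof -
  have "\<forall>j. \<exists>k. \<forall>x\<in>dom \<alpha>. the (\<alpha> x) $ k = x $ j" using coord assms(1-3) by blast
  then obtain \<sigma> where \<sigma>: "\<forall>j. \<forall>x\<in>dom \<alpha>. the (\<alpha> x) $ \<sigma> j = x $ j" by metis
  have fx: "\<sigma> i = i" for i
  proof -
    obtain m where m: "1 \<le> m" "axis_pt i m \<in> dom \<alpha> - {ones}" "the (\<alpha> (axis_pt i m)) \<in> ray i"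
      using assms(4) by blast
    have "m \<noteq> 1"
    proof
      assume "m = 1"
      hence "axis_pt i m = ones" unfolding ones_def axis_pt_def by (simp add: vec_eq_iff)
      thus False using m(2) by simp
    qed
    obtain k' where k': "the (\<alpha> (axis_pt i m)) = axis_pt i k'" using m(3) unfolding ray_def by blast
    have e: "the (\<alpha> (axis_pt i m)) $ \<sigma> i = m" using \<sigma> m(2) by (simp add: axis_comp)
    show "\<sigma> i = i"
    proof (rule ccontr)
      assume "\<sigma> i \<noteq> i"
      hence "the (\<alpha> (axis_pt i m)) $ \<sigma> i = 1" using k' by (simp add: axis_comp)
      with e \<open>m \<noteq> 1\<close> show False by simp
    qed
  qed
  show ?thesis
  proof (intro allI ballI)
    fix i x assume "x \<in> dom \<alpha> \<inter> ray i"
    hence xD: "x \<in> dom \<alpha>" by simp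
    have "the (\<alpha> x) = x" using \<sigma> fx xD by (metis vec_eq_iff)
    then show "\<alpha> x = Some x" using xD by auto
  qed
qed

end
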